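(* Let $\mathbb{K}$ be a field of characteristic zero, $\mathfrak{g}$ a finite-dimensional Lie bialgebra (only its underlying vector space matters here), and $n\ge3$ an integer. Let $\alpha,\beta\in S^n(\mathfrak{g}\oplus\mathfrak{g}\oplus\mathfrak{g})\subset S^\cdot(\mathfrak{g})^{\otimes3}$ satisfy $(\epsilon\otimes\mathrm{id}\otimes\mathrm{id})(\alpha)=(\mathrm{id}\otimes\epsilon\otimes\mathrm{id})(\alpha)=(\mathrm{id}\otimes\mathrm{id}\otimes\epsilon)(\alpha)=0$ and the same three identities for $\beta$. Then there exists $\sigma\in S^n(\mathfrak{g}\oplus\mathfrak{g})\subset S^\cdot(\mathfrak{g})^{\otimes2}$ with $$(\epsilon\otimes\mathrm{id})(\sigma)=(\mathrm{id}\otimes\epsilon)(\sigma)=0,\qquad(\mathrm{d}\otimes\mathrm{id})(\sigma)=-\alpha,\qquad(\mathrm{id}\otimes\mathrm{d})(\sigma)=-\beta$$ if and only if $$(\mathrm{id}\otimes\mathrm{id}\otimes\mathrm{d})(\alpha)=(\mathrm{d}\otimes\mathrm{id}\otimes\mathrm{id})(\beta),\qquad(\mathrm{d}^{(2)}\otimes\mathrm{id})(\alpha)=(\mathrm{id}\otimes\mathrm{d}^{(2)})(\beta)=0,\qquad\alpha^{1,2,3}=\alpha^{2,1,3},\quad\beta^{1,2,3}=\beta^{1,3,2}.$$ Moreover, if these conditions hold, such a $\sigma$ is unique.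
   Context: $S^\cdot(\mathfrak{g})$ is the symmetric algebra with its cocommutative coproduct $\Delta_0$ (elements of $\mathfrak{g}$ primitive) and counit $\epsilon$ (projection onto degree $0$). We identify $S^\cdot(\mathfrak{g}^{\oplus k})$ with $S^\cdot(\mathfrak{g})^{\otimes k}$; $S^n(\mathfrak{g}^{\oplus k})$ is the total-degree-$n$ part. The co-Hochschild coboundary $\mathrm{d}:S^\cdot(\mathfrak{g})\to S^\cdot(\mathfrak{g})^{\otimes2}$ is $\mathrm{d}(f)=\Delta_0(f)-f\otimes1-1\otimes f$, and $\mathrm{d}^{(2)}:S^\cdot(\mathfrak{g})^{\otimes2}\to S^\cdot(\mathfrak{g})^{\otimes3}$ is $\mathrm{d}^{(2)}(f)=(\mathrm{d}\otimes\mathrm{id})(f)-(\mathrm{id}\otimes\mathrm{d})(f)$. Superscripts such as $\alpha^{2,1,3}$ denote permutation of tensor factors. *)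

theory Defs
  imports Main
begin

text \<open>
  Model: g has a basis indexed by the finite type 'v.  S(g)^{tensor k} = S(g^{oplus k}) is the
  polynomial algebra in the variables x_{j,v} (j < k the tensor factor, v a basis index).
  A monomial is an exponent function m :: nat => 'v => nat (m j v = exponent of x_{j,v});
  an element of S(g)^{tensor k} is given by its coefficient function
  p :: (nat => 'v => nat) => 'k, supported on monomials living in the factors j < k.
\<close>

type_synonym 'v mono = "nat \<Rightarrow> 'v \<Rightarrow> nat"
type_synonym ('v, 'k) tens = "'v mono \<Rightarrow> 'k"

definition mdeg :: "nat \<Rightarrow> ('v::finite) mono \<Rightarrow> nat" where
  "mdeg k m = (\<Sum>j<k. \<Sum>v\<in>UNIV. m j v)"

text \<open>p is an element of S^n(g^{oplus k}) inside S(g)^{tensor k}\<close>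
definition homog :: "nat \<Rightarrow> nat \<Rightarrow> ('v::finite, 'k::zero) tens \<Rightarrow> bool" where
  "homog k n p \<longleftrightarrow>
     (\<forall>m. p m \<noteq> 0 \<longrightarrow> (\<forall>j\<ge>k. \<forall>v. m j v = 0) \<and> mdeg k m = n)"

definition ins_zero :: "nat \<Rightarrow> 'v mono \<Rightarrow> 'v mono" where
  "ins_zero i m = (\<lambda>j. if j < i then m j else if j = i then (\<lambda>_. 0) else m (j - 1))"

text \<open>counit epsilon applied to the i-th tensor factor (0-based)\<close>
definition eps_at :: "nat \<Rightarrow> ('v, 'k) tens \<Rightarrow> ('v, 'k) tens" where
  "eps_at i p = (\<lambda>m. p (ins_zero i m))"

text \<open>merge tensor factors i and i+1 (inverse direction of the coproduct)\<close>
definition merge_at :: "nat \<Rightarrow> 'v mono \<Rightarrow> 'v mono" where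
  "merge_at i m = (\<lambda>j. if j < i then m j else if j = i then (\<lambda>v. m i v + m (Suc i) v)
                        else m (Suc j))"

text \<open>coefficient of x^a tensor x^b in Delta_0(x^(a+b)), elements of g primitive\<close>
definition cop_coeff :: "('v::finite \<Rightarrow> nat) \<Rightarrow> ('v \<Rightarrow> nat) \<Rightarrow> 'k::field" where
  "cop_coeff a b = of_nat (\<Prod>v\<in>UNIV. (a v + b v) choose a v)"

text \<open>co-Hochschild coboundary d(f) = Delta_0(f) - f tensor 1 - 1 tensor f applied to the
  i-th tensor factor (0-based); factor i becomes factors i, i+1.\<close>
definition d_at :: "nat \<Rightarrow> ('v::finite, 'k::field) tens \<Rightarrow> ('v, 'k) tens" where
  "d_at i p = (\<lambda>m. (cop_coeff (m i) (m (Suc i))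
                    - (if m (Suc i) = (\<lambda>_. 0) then 1 else 0)
                    - (if m i = (\<lambda>_. 0) then 1 else 0)) * p (merge_at i m))"

definition swap_at :: "nat \<Rightarrow> ('v, 'k) tens \<Rightarrow> ('v, 'k) tens" where
  "swap_at i p = (\<lambda>m. p (\<lambda>j. if j = i then m (Suc i) else if j = Suc i then m i else m j))"

end

theory Submission
  imports Defs
begin


definition mk :: "('v \<Rightarrow> nat) list \<Rightarrow> 'v mono" where
  "mk xs = (\<lambda>j. if j < length xs then xs ! j else (\<lambda>_. 0))"

definition supp_ok :: "nat \<Rightarrow> 'v mono \<Rightarrow> bool" where
  "supp_ok k m \<longleftrightarrow> (\<forall>j\<ge>k. \<forall>v. m j v = 0)"

definition sz :: "('v::finite \<Rightarrow> nat) \<Rightarrow> nat" where "sz a = (\<Sum>v\<in>UNIV. a v)"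

definition ev :: "'v \<Rightarrow> 'v \<Rightarrow> nat" where "ev v = (\<lambda>u. if u = v then 1 else 0)"

definition Dc :: "('v::finite \<Rightarrow> nat) \<Rightarrow> ('v \<Rightarrow> nat) \<Rightarrow> 'k::field" where
  "Dc a b = cop_coeff a b - (if b = (\<lambda>_. 0) then 1 else 0) - (if a = (\<lambda>_. 0) then 1 else 0)"

definition gf :: "('v::finite \<Rightarrow> nat) \<Rightarrow> nat" where "gf a = (\<Prod>v\<in>UNIV. fact (a v))"

lemma d_at_Dc: "d_at i p m = Dc (m i) (m (Suc i)) * p (merge_at i m)"
  by (simp add: d_at_def Dc_def)

lemma gf_pos: "gf a > 0"
  unfolding gf_def by (simp add: prod_pos)

lemma gf_nz: "(of_nat (gf a) :: 'k::field_char_0) \<noteq> 0"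
  using gf_pos[of a] by simp

lemma cop_G: "(cop_coeff a b :: 'k::field) * of_nat (gf a) * of_nat (gf b) = of_nat (gf (\<lambda>v. a v + b v))"
proof -
  have "(\<Prod>v\<in>UNIV. (a v + b v) choose a v) * gf a * gf b = gf (\<lambda>v. a v + b v)"
    unfolding gf_def prod.distrib[symmetric]
  proof (rule prod.cong)
    fix x
    have "fact (a x) * fact (a x + b x - a x) * (a x + b x choose a x) = fact (a x + b x)"
      by (rule binomial_fact_lemma) simp
    then show "(a x + b x choose a x) * fact (a x) * fact (b x) = fact (a x + b x)"
      by (simp add: mult_ac)
  qed simp
  then show ?thesis unfolding cop_coeff_def by (metis of_nat_mult)
qed

lemma cop_nz: "(cop_coeff a b :: 'k::field_char_0) \<noteq> 0"
  unfolding cop_coeff_def by (simp add: prod_pos)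

lemma cop_sym: "cop_coeff a b = cop_coeff b a"
  unfolding cop_coeff_def
  by (metis (no_types, lifting) add.commute binomial_symmetric diff_add_inverse le_add2 prod.cong)

lemma cop_0l[simp]: "cop_coeff (\<lambda>_. 0) b = 1" unfolding cop_coeff_def by simp
lemma cop_0r[simp]: "cop_coeff a (\<lambda>_. 0) = 1" unfolding cop_coeff_def by simp

lemma cop_assoc3: "(cop_coeff a b :: 'k::field_char_0) * cop_coeff (\<lambda>v. a v + b v) c * (of_nat (gf a) * of_nat (gf b) * of_nat (gf c))
     = of_nat (gf (\<lambda>v. a v + b v + c v))"
proof -
  have "(cop_coeff a b :: 'k) * cop_coeff (\<lambda>v. a v + b v) c * (of_nat (gf a) * of_nat (gf b) * of_nat (gf c))
     = (cop_coeff a b * of_nat (gf a) * of_nat (gf b)) * (cop_coeff (\<lambda>v. a v + b v) c * of_nat (gf c))"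
    by (simp add: mult_ac)
  also have "\<dots> = cop_coeff (\<lambda>v. a v + b v) c * of_nat (gf (\<lambda>v. a v + b v)) * of_nat (gf c)"
    using cop_G[of a b, where 'k='k] by (simp only: mult_ac)
  also have "\<dots> = of_nat (gf (\<lambda>v. a v + b v + c v))"
    by (simp add: cop_G)
  finally show ?thesis .
qed

lemma cop_assoc: "(cop_coeff a b :: 'k::field_char_0) * cop_coeff (\<lambda>v. a v + b v) c
   = cop_coeff b c * cop_coeff a (\<lambda>v. b v + c v)"
proof -
  have 1: "(cop_coeff a b :: 'k) * cop_coeff (\<lambda>v. a v + b v) c * (of_nat (gf a) * of_nat (gf b) * of_nat (gf c))
     = of_nat (gf (\<lambda>v. a v + b v + c v))" by (rule cop_assoc3)
  have 2: "(cop_coeff b c :: 'k) * cop_coeff (\<lambda>v. b v + c v) a * (of_nat (gf b) * of_nat (gf c) * of_nat (gf a))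
     = of_nat (gf (\<lambda>v. b v + c v + a v))" by (rule cop_assoc3)
  have 3: "(\<lambda>v. b v + c v + a v) = (\<lambda>v. a v + b v + c v)" by (auto simp: fun_eq_iff)
  have "(cop_coeff a b :: 'k) * cop_coeff (\<lambda>v. a v + b v) c * (of_nat (gf a) * of_nat (gf b) * of_nat (gf c))
      = cop_coeff b c * cop_coeff a (\<lambda>v. b v + c v) * (of_nat (gf a) * of_nat (gf b) * of_nat (gf c))"
    using 1 2 3 by (simp add: cop_sym[of _ a] mult_ac)
  then show ?thesis using gf_nz[of a, where 'k='k] gf_nz[of b, where 'k='k] gf_nz[of c, where 'k='k]
    by (simp del: of_nat_eq_0_iff)
qed

lemma fun0_add_iff[simp]: "((\<lambda>v. a v + b v) = (\<lambda>_. 0::nat)) \<longleftrightarrow> a = (\<lambda>_. 0) \<and> b = (\<lambda>_. 0)"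
  by (auto simp: fun_eq_iff)

lemma Dc_assoc: "(Dc a b :: 'k::field_char_0) * Dc (\<lambda>v. a v + b v) c = Dc b c * Dc a (\<lambda>v. b v + c v)"
  using cop_assoc[of a b c, where 'k='k]
  by (cases "a = (\<lambda>_. 0)"; cases "b = (\<lambda>_. 0)"; cases "c = (\<lambda>_. 0)"; simp add: Dc_def)

lemma Dc_sym: "Dc a b = Dc b a"
  unfolding Dc_def by (simp add: cop_sym)

lemma ev_nz[simp]: "ev v \<noteq> (\<lambda>_. 0)" by (auto simp: ev_def fun_eq_iff)

lemma split_const:
  fixes g :: "('v \<Rightarrow> nat) \<Rightarrow> ('v \<Rightarrow> nat) \<Rightarrow> 'a"
  assumes S: "\<And>a b. g a b = g b a"
    and A: "\<And>a b c. a \<noteq> (\<lambda>_. 0) \<Longrightarrow> b \<noteq> (\<lambda>_. 0) \<Longrightarrow> c \<noteq> (\<lambda>_. 0) \<Longrightarrow>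
               g (\<lambda>v. a v + b v) c = g a (\<lambda>v. b v + c v)"
    and a: "a \<noteq> (\<lambda>_. 0)" and b: "b \<noteq> (\<lambda>_. 0)" and xv: "a v + b v > 0"
  shows "g a b = g (ev v) (\<lambda>u. a u + b u - ev v u)"
proof -
  define x where "x = (\<lambda>u. a u + b u)"
  have step1: "g a b = g (ev u) (\<lambda>w. x w - ev u w)" if au: "a u > 0" for u
  proof (cases "a = ev u")
    case True
    then have "(\<lambda>w. x w - ev u w) = b" by (auto simp: x_def ev_def fun_eq_iff)
    with True show ?thesis by simp
  next
    case False
    define r where "r = (\<lambda>w. a w - ev u w)"
    have r: "r \<noteq> (\<lambda>_. 0)"
    proof
      assume "r = (\<lambda>_. 0)"
      then have "\<And>w. a w - ev u w = 0" by (simp add: r_def fun_eq_iff)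
      then have "\<And>w. a w \<le> ev u w" by simp
      then have "a = ev u" using au unfolding ev_def fun_eq_iff
        by (metis One_nat_def Suc_leI le_antisym le_zero_eq)
      with False show False by simp
    qed
    have "a = (\<lambda>w. ev u w + r w)" using au by (auto simp: r_def ev_def fun_eq_iff)
    then have "g a b = g (\<lambda>w. ev u w + r w) b" by simp
    also have "\<dots> = g (ev u) (\<lambda>w. r w + b w)" by (rule A) (use r b in auto)
    also have "(\<lambda>w. r w + b w) = (\<lambda>w. x w - ev u w)" using au by (auto simp: r_def x_def ev_def fun_eq_iff)
    finally show ?thesis .
  qed
  have step2: "g (ev u) (\<lambda>w. x w - ev u w) = g (ev v') (\<lambda>w. x w - ev v' w)"
    if xu: "x u > 0" and xv': "x v' > 0" for u v'
  proof (cases "u = v'")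
    case True then show ?thesis by simp
  next
    case False
    define r where "r = (\<lambda>w. x w - ev u w - ev v' w)"
    have e1: "(\<lambda>w. x w - ev u w) = (\<lambda>w. ev v' w + r w)"
      using xu xv' False by (auto simp: r_def ev_def fun_eq_iff)
    have e2: "(\<lambda>w. x w - ev v' w) = (\<lambda>w. ev u w + r w)"
      using xu xv' False by (auto simp: r_def ev_def fun_eq_iff)
    show ?thesis
    proof (cases "r = (\<lambda>_. 0)")
      case True
      then show ?thesis unfolding e1 e2 by (simp add: S)
    next
      case False2: False
      have "g (ev u) (\<lambda>w. ev v' w + r w) = g (\<lambda>w. ev u w + ev v' w) r"
        by (rule A[symmetric]) (use False2 in auto)
      also have "(\<lambda>w. ev u w + ev v' w) = (\<lambda>w. ev v' w + ev u w)" by (auto simp: fun_eq_iff)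
      also have "g \<dots> r = g (ev v') (\<lambda>w. ev u w + r w)"
        by (rule A) (use False2 in auto)
      finally show ?thesis unfolding e1 e2 .
    qed
  qed
  obtain u where au: "a u > 0" using a by (auto simp: fun_eq_iff)
  have "g a b = g (ev u) (\<lambda>w. x w - ev u w)" by (rule step1[OF au])
  also have "\<dots> = g (ev v) (\<lambda>w. x w - ev v w)" by (rule step2) (use au xv in \<open>auto simp: x_def\<close>)
  finally show ?thesis by (simp add: x_def)
qed

lemma gf_ev: "gf (ev v) = 1"
  unfolding gf_def by (rule prod.neutral) (simp add: ev_def)

lemma split_weighted:
  fixes f :: "('v::finite \<Rightarrow> nat) \<Rightarrow> ('v \<Rightarrow> nat) \<Rightarrow> 'k::field_char_0"
  assumes S: "\<And>a b. f a b = f b a"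
    and A: "\<And>a b c. a \<noteq> (\<lambda>_. 0) \<Longrightarrow> b \<noteq> (\<lambda>_. 0) \<Longrightarrow> c \<noteq> (\<lambda>_. 0) \<Longrightarrow>
               cop_coeff a b * f (\<lambda>v. a v + b v) c = cop_coeff b c * f a (\<lambda>v. b v + c v)"
    and a: "a \<noteq> (\<lambda>_. 0)" and b: "b \<noteq> (\<lambda>_. 0)" and xv: "a v + b v > 0"
  shows "cop_coeff a b * f (ev v) (\<lambda>u. a u + b u - ev v u)
       = cop_coeff (ev v) (\<lambda>u. a u + b u - ev v u) * f a b"
proof -
  define G where "G = (\<lambda>a::'v\<Rightarrow>nat. (of_nat (gf a) :: 'k))"
  define g where "g = (\<lambda>a b. f a b * G a * G b)"
  have gS: "\<And>a b. g a b = g b a" unfolding g_def by (subst S) (simp only: mult_ac)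
  have gA: "g (\<lambda>v. a v + b v) c = g a (\<lambda>v. b v + c v)"
    if "a \<noteq> (\<lambda>_. 0)" "b \<noteq> (\<lambda>_. 0)" "c \<noteq> (\<lambda>_. 0)" for a b c
  proof -
    have "g (\<lambda>v. a v + b v) c = f (\<lambda>v. a v + b v) c * (cop_coeff a b * G a * G b) * G c"
      by (simp add: g_def G_def cop_G)
    also have "\<dots> = (cop_coeff a b * f (\<lambda>v. a v + b v) c) * G a * G b * G c" by (simp add: mult_ac)
    also have "\<dots> = (cop_coeff b c * f a (\<lambda>v. b v + c v)) * G a * G b * G c" using A[OF that] by simp
    also have "\<dots> = f a (\<lambda>v. b v + c v) * G a * (cop_coeff b c * G b * G c)" by (simp add: mult_ac)
    also have "\<dots> = g a (\<lambda>v. b v + c v)" by (simp add: g_def G_def cop_G)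
    finally show ?thesis .
  qed
  define r where "r = (\<lambda>u. a u + b u - ev v u)"
  have gs: "g a b = g (ev v) r" unfolding r_def by (rule split_const[of g, OF gS gA a b xv])
  have er: "(\<lambda>u. ev v u + r u) = (\<lambda>u. a u + b u)" using xv by (auto simp: r_def ev_def fun_eq_iff)
  have Gev: "G (ev v) = 1" by (simp add: G_def gf_ev)
  have "(cop_coeff a b * f (ev v) r) * (G a * G b * G r)
      = (cop_coeff a b * G a * G b) * (f (ev v) r * G (ev v) * G r)" using Gev by (simp add: mult_ac)
  also have "\<dots> = G (\<lambda>u. a u + b u) * g (ev v) r" by (simp add: g_def G_def cop_G)
  also have "\<dots> = (cop_coeff (ev v) r * G (ev v) * G r) * g a b" using gs er cop_G[of "ev v" r, where 'k='k]
    by (simp add: G_def)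
  also have "\<dots> = (cop_coeff (ev v) r * f a b) * (G a * G b * G r)" by (simp add: g_def Gev mult_ac)
  finally have "(cop_coeff a b * f (ev v) r) * (G a * G b * G r) = (cop_coeff (ev v) r * f a b) * (G a * G b * G r)" .
  moreover have "G a * G b * G r \<noteq> 0" by (simp add: G_def gf_nz del: of_nat_eq_0_iff)
  ultimately show ?thesis unfolding r_def[symmetric] by simp
qed



lemma mk_app: "mk xs j = (if j < length xs then xs ! j else (\<lambda>_. 0))"
  by (simp add: mk_def)

lemma mk2_supp: "supp_ok 2 m \<Longrightarrow> m = mk [m 0, m 1]"
  unfolding supp_ok_def mk_def
  by (rule ext) (auto simp: nth_Cons' fun_eq_iff less_Suc_eq numeral_2_eq_2)

lemma mk3_supp: "supp_ok 3 m \<Longrightarrow> m = mk [m 0, m 1, m 2]"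
  unfolding supp_ok_def mk_def
  by (rule ext) (auto simp: nth_Cons' fun_eq_iff less_Suc_eq numeral_3_eq_3 numeral_2_eq_2)

lemma supp_mk: "supp_ok (length xs) (mk xs)"
  by (simp add: supp_ok_def mk_def)

lemma mdeg2: "mdeg 2 m = sz (m 0) + sz (m 1)"
  by (simp add: mdeg_def sz_def numeral_2_eq_2)

lemma mdeg3: "mdeg 3 m = sz (m 0) + sz (m 1) + sz (m 2)"
  by (simp add: mdeg_def sz_def numeral_3_eq_3 numeral_2_eq_2)

lemma homog_supp: "homog k n p \<Longrightarrow> \<not> supp_ok k m \<Longrightarrow> p m = 0"
  unfolding homog_def supp_ok_def by blast

lemma homog_deg: "homog k n p \<Longrightarrow> mdeg k m \<noteq> n \<Longrightarrow> p m = 0"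
  unfolding homog_def by blast

lemma merge_supp: "i < k \<Longrightarrow> \<not> supp_ok (Suc k) m \<Longrightarrow> \<not> supp_ok k (merge_at i m)"
  unfolding supp_ok_def merge_at_def
  by (auto, metis (no_types, lifting) Suc_diff_1 Suc_le_D Suc_le_eq le_imp_less_Suc leD less_imp_le_nat not_less_eq order.strict_trans)

lemma merge_mk3:
  "merge_at 0 (mk [a,b,c]) = mk [\<lambda>v. a v + b v, c]"
  "merge_at 1 (mk [a,b,c]) = mk [a, \<lambda>v. b v + c v]"
  unfolding merge_at_def mk_def by (rule ext; auto simp: nth_Cons')+

lemma merge_mk4:
  "merge_at 0 (mk [a,b,c,d]) = mk [\<lambda>v. a v + b v, c, d]"
  "merge_at 1 (mk [a,b,c,d]) = mk [a, \<lambda>v. b v + c v, d]"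
  "merge_at 2 (mk [a,b,c,d]) = mk [a, b, \<lambda>v. c v + d v]"
  unfolding merge_at_def mk_def by (rule ext; auto simp: nth_Cons')+

lemma merge_mk':
  "merge_at (Suc 0) (mk [a,b,c]) = mk [a, \<lambda>v. b v + c v]"
  "merge_at (Suc 0) (mk [a,b,c,d]) = mk [a, \<lambda>v. b v + c v, d]"
  "merge_at (Suc (Suc 0)) (mk [a,b,c,d]) = mk [a, b, \<lambda>v. c v + d v]"
  unfolding merge_at_def mk_def by (rule ext; auto simp: nth_Cons')+

lemma ins_mk:
  "ins_zero 0 (mk [b,c]) = mk [\<lambda>_. 0, b, c]"
  "ins_zero 1 (mk [a,c]) = mk [a, \<lambda>_. 0, c]"
  "ins_zero 2 (mk [a,b]) = mk [a, b, \<lambda>_. 0]"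
  "ins_zero 0 (mk [b]) = mk [\<lambda>_. 0, b]"
  "ins_zero 1 (mk [a]) = mk [a, \<lambda>_. 0]"
  unfolding ins_zero_def mk_def by (rule ext; auto simp: nth_Cons')+

lemma ins_mk':
  "ins_zero (Suc 0) (mk [a,c]) = mk [a, \<lambda>_. 0, c]"
  "ins_zero (Suc (Suc 0)) (mk [a,b]) = mk [a, b, \<lambda>_. 0]"
  "ins_zero (Suc 0) (mk [a]) = mk [a, \<lambda>_. 0]"
  unfolding ins_zero_def mk_def by (rule ext; auto simp: nth_Cons')+

lemma swap_mk:
  "swap_at 0 p (mk [a,b,c]) = p (mk [b,a,c])"
  "swap_at 1 p (mk [a,b,c]) = p (mk [a,c,b])"
  unfolding swap_at_def mk_def by (rule arg_cong[where f=p], rule ext, auto simp: nth_Cons')+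

lemma swap_mk':
  "swap_at (Suc 0) p (mk [a,b,c]) = p (mk [a,c,b])"
  unfolding swap_at_def mk_def by (rule arg_cong[where f=p], rule ext, auto simp: nth_Cons')+

lemma swap_d: "swap_at i (d_at i p) = d_at i (p :: ('v::finite, 'k::field) tens)"
proof
  fix m :: "'v mono"
  have "merge_at i (\<lambda>j. if j = i then m (Suc i) else if j = Suc i then m i else m j) = merge_at i m"
    unfolding merge_at_def by (rule ext) (auto simp: fun_eq_iff)
  then show "swap_at i (d_at i p) m = d_at i p m"
    unfolding swap_at_def d_at_Dc by (simp add: Dc_sym)
qed

lemma merge_app: "merge_at i m j = (if j < i then m j else if j = i then (\<lambda>v. m i v + m (Suc i) v) else m (Suc j))"
  by (simp add: merge_at_def)

lemma mm1: "merge_at 0 (merge_at 2 m) = merge_at 1 (merge_at 0 m)"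
  unfolding merge_at_def by (rule ext) (auto simp: numeral_2_eq_2)
lemma mm1': "merge_at 0 (merge_at (Suc (Suc 0)) m) = merge_at (Suc 0) (merge_at 0 m)"
  using mm1[of m] by (simp add: numeral_2_eq_2)
lemma mm2: "merge_at 0 (merge_at 0 m) = merge_at 0 (merge_at 1 m)"
  unfolding merge_at_def by (rule ext) (auto simp: add.assoc numeral_2_eq_2)
lemma mm3: "merge_at 1 (merge_at 1 m) = merge_at 1 (merge_at 2 m)"
  unfolding merge_at_def by (rule ext) (auto simp: add.assoc numeral_2_eq_2 numeral_3_eq_3)

lemma mm3': "merge_at (Suc 0) (merge_at (Suc 0) m) = merge_at (Suc 0) (merge_at (Suc (Suc 0)) m)"
  using mm3[of m] by (simp add: numeral_2_eq_2)

lemma nec: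
  fixes \<sigma> \<alpha> \<beta> :: "('v::finite, 'k::field_char_0) tens"
  assumes d0: "d_at 0 \<sigma> = (\<lambda>m. - \<alpha> m)" and d1: "d_at 1 \<sigma> = (\<lambda>m. - \<beta> m)"
  shows "d_at 2 \<alpha> = d_at 0 \<beta>
       \<and> (\<lambda>m. d_at 0 \<alpha> m - d_at 1 \<alpha> m) = (\<lambda>_. 0)
       \<and> (\<lambda>m. d_at 1 \<beta> m - d_at 2 \<beta> m) = (\<lambda>_. 0)
       \<and> \<alpha> = swap_at 0 \<alpha>
       \<and> \<beta> = swap_at 1 \<beta>"
proof -
  have a: "\<alpha> = (\<lambda>m. - d_at 0 \<sigma> m)" using d0 by (simp add: fun_eq_iff)
  have b: "\<beta> = (\<lambda>m. - d_at 1 \<sigma> m)" using d1 by (simp add: fun_eq_iff)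
  have neg: "d_at i (\<lambda>m. - p m) = (\<lambda>m. - d_at i p m)" for i and p :: "('v, 'k) tens"
    by (simp add: d_at_def fun_eq_iff)
  have swn: "swap_at i (\<lambda>m. - p m) = (\<lambda>m. - swap_at i p m)" for i and p :: "('v, 'k) tens"
    by (simp add: swap_at_def fun_eq_iff)
  have 1: "d_at 2 \<alpha> = d_at 0 \<beta>"
    unfolding a b neg
    by (rule ext) (simp add: d_at_Dc merge_app mm1' mult_ac numeral_2_eq_2 numeral_3_eq_3)
  have 2: "(\<lambda>m. d_at 0 \<alpha> m - d_at 1 \<alpha> m) = (\<lambda>_. 0)"
    unfolding a neg
  proof (rule ext)
    fix m :: "'v mono"
    show "- d_at 0 (d_at 0 \<sigma>) m - - d_at 1 (d_at 0 \<sigma>) m = 0"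
      using Dc_assoc[of "m 0" "m (Suc 0)" "m (Suc (Suc 0))", where 'k='k]
      by (simp add: d_at_Dc merge_app mm2 mult.assoc[symmetric])
  qed
  have 3: "(\<lambda>m. d_at 1 \<beta> m - d_at 2 \<beta> m) = (\<lambda>_. 0)"
    unfolding b neg
  proof (rule ext)
    fix m :: "'v mono"
    show "- d_at 1 (d_at 1 \<sigma>) m - - d_at 2 (d_at 1 \<sigma>) m = 0"
      using Dc_assoc[of "m (Suc 0)" "m (Suc (Suc 0))" "m (Suc (Suc (Suc 0)))", where 'k='k]
      by (simp add: d_at_Dc merge_app mm3' mult.assoc[symmetric] numeral_2_eq_2 numeral_3_eq_3)
  qed
  have 4: "\<alpha> = swap_at 0 \<alpha>" unfolding a swn swap_d ..
  have 5: "\<beta> = swap_at 1 \<beta>" unfolding b swn swap_d ..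
  show ?thesis using 1 2 3 4 5 by blast
qed



lemma sz_add: "sz (\<lambda>v. a v + b v) = sz a + sz b"
  by (simp add: sz_def sum.distrib)

lemma sz_ev: "sz (ev v) = 1"
  by (simp add: sz_def ev_def)

lemma sz0: "sz a = 0 \<longleftrightarrow> a = (\<lambda>_. 0)"
  by (auto simp: sz_def fun_eq_iff)

lemma ev_r: "a v \<noteq> 0 \<Longrightarrow> (\<lambda>u. ev v u + (a u - ev v u)) = a"
  by (auto simp: ev_def fun_eq_iff)

lemma sz_sub: "a v \<noteq> 0 \<Longrightarrow> sz a = sz (\<lambda>u. a u - ev v u) + 1"
  using sz_add[of "ev v" "\<lambda>u. a u - ev v u"] ev_r[of a v] by (simp add: sz_ev)

lemma Dc_cop: "a \<noteq> (\<lambda>_. 0) \<Longrightarrow> b \<noteq> (\<lambda>_. 0) \<Longrightarrow> Dc a b = cop_coeff a b"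
  by (simp add: Dc_def)

definition sig0 :: "nat \<Rightarrow> ('v::finite, 'k::field) tens \<Rightarrow> ('v, 'k) tens \<Rightarrow> ('v, 'k) tens" where
  "sig0 n \<alpha> \<beta> m = (if supp_ok 2 m \<and> sz (m 0) + sz (m 1) = n \<and> m 0 \<noteq> (\<lambda>_. 0) \<and> m 1 \<noteq> (\<lambda>_. 0) then
     (if 2 \<le> sz (m 0) then
        (let v = SOME v. 0 < m 0 v in
           - \<alpha> (mk [ev v, \<lambda>u. m 0 u - ev v u, m 1]) / cop_coeff (ev v) (\<lambda>u. m 0 u - ev v u))
      else
        (let w = SOME w. 0 < m 1 w in
           - \<beta> (mk [m 0, ev w, \<lambda>u. m 1 u - ev w u]) / cop_coeff (ev w) (\<lambda>u. m 1 u - ev w u)))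
   else 0)"

lemma sig0_mk: "sig0 n \<alpha> \<beta> (mk [x, y]) = (if sz x + sz y = n \<and> x \<noteq> (\<lambda>_. 0) \<and> y \<noteq> (\<lambda>_. 0) then
     (if 2 \<le> sz x then
        (let v = SOME v. 0 < x v in
           - \<alpha> (mk [ev v, \<lambda>u. x u - ev v u, y]) / cop_coeff (ev v) (\<lambda>u. x u - ev v u))
      else
        (let w = SOME w. 0 < y w in
           - \<beta> (mk [x, ev w, \<lambda>u. y u - ev w u]) / cop_coeff (ev w) (\<lambda>u. y u - ev w u)))
   else 0)"
proof -
  have "supp_ok 2 (mk [x, y])" by (simp add: supp_ok_def mk_def)
  then show ?thesis by (simp add: sig0_def mk_app)
qed

lemma some_nz: "(a::'v \<Rightarrow> nat) \<noteq> (\<lambda>_. 0) \<Longrightarrow> a (SOME v. 0 < a v) \<noteq> 0"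
proof -
  assume "a \<noteq> (\<lambda>_. 0)"
  then obtain v where "a v \<noteq> 0" by (auto simp: fun_eq_iff)
  then have "\<exists>v. 0 < a v" by auto
  then have "0 < a (SOME v. 0 < a v)" by (rule someI_ex)
  then show ?thesis by simp
qed

lemma uniq:
  fixes \<sigma> \<alpha> \<beta> :: "('v::finite, 'k::field_char_0) tens"
  assumes n3: "n \<ge> 3" and h: "homog 2 n \<sigma>" and e0: "eps_at 0 \<sigma> = (\<lambda>_. 0)" and e1: "eps_at 1 \<sigma> = (\<lambda>_. 0)"
    and d0: "d_at 0 \<sigma> = (\<lambda>m. - \<alpha> m)" and d1: "d_at 1 \<sigma> = (\<lambda>m. - \<beta> m)"
  shows "\<sigma> = sig0 n \<alpha> \<beta>"
proof
  fix m :: "'v mono"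
  show "\<sigma> m = sig0 n \<alpha> \<beta> m"
  proof (cases "supp_ok 2 m")
    case False
    then show ?thesis using homog_supp[OF h False] by (simp add: sig0_def)
  next
    case True
    then have m: "m = mk [m 0, m 1]" by (rule mk2_supp)
    define x where "x = m 0"
    define y where "y = m 1"
    have m': "m = mk [x, y]" using m x_def y_def by simp
    have mdx: "mdeg 2 (mk [x, y]) = sz x + sz y" by (simp add: mdeg2 mk_app)
    show ?thesis unfolding m'
    proof (cases "sz x + sz y = n \<and> x \<noteq> (\<lambda>_. 0) \<and> y \<noteq> (\<lambda>_. 0)")
      case False
      have "\<sigma> (mk [x, y]) = 0"
      proof (cases "sz x + sz y = n")
        case False
        then show ?thesis using homog_deg[OF h] mdx by simp
      next
        case True
        with \<open>\<not> (sz x + sz y = n \<and> x \<noteq> (\<lambda>_. 0) \<and> y \<noteq> (\<lambda>_. 0))\<close>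
        have "x = (\<lambda>_. 0) \<or> y = (\<lambda>_. 0)" by blast
        then show ?thesis
        proof
          assume "x = (\<lambda>_. 0)"
          then show ?thesis using fun_cong[OF e0, of "mk [y]"] by (simp add: eps_at_def ins_mk ins_mk')
        next
          assume "y = (\<lambda>_. 0)"
          then show ?thesis using fun_cong[OF e1, of "mk [x]"] by (simp add: eps_at_def ins_mk ins_mk')
        qed
      qed
      moreover have "sig0 n \<alpha> \<beta> (mk [x, y]) = 0" by (subst sig0_mk, rule if_not_P[OF False])
      ultimately show "\<sigma> (mk [x, y]) = sig0 n \<alpha> \<beta> (mk [x, y])" by simp
    next
      case True
      then have deg: "sz x + sz y = n" and x0: "x \<noteq> (\<lambda>_. 0)" and y0: "y \<noteq> (\<lambda>_. 0)" by auto
      show "\<sigma> (mk [x, y]) = sig0 n \<alpha> \<beta> (mk [x, y])"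
      proof (cases "2 \<le> sz x")
        case True
        define v where "v = (SOME v. 0 < x v)"
        have xv: "x v \<noteq> 0" unfolding v_def by (rule some_nz[OF x0])
        define r where "r = (\<lambda>u. x u - ev v u)"
        have r0: "r \<noteq> (\<lambda>_. 0)" using sz_sub[of x v, OF xv] True sz0[of r] by (auto simp: r_def)
        have er: "(\<lambda>u. ev v u + r u) = x" unfolding r_def by (rule ev_r[of x v, OF xv])
        have "d_at 0 \<sigma> (mk [ev v, r, y]) = - \<alpha> (mk [ev v, r, y])" using d0 by simp
        then have "cop_coeff (ev v) r * \<sigma> (mk [x, y]) = - \<alpha> (mk [ev v, r, y])"
          by (simp add: d_at_Dc merge_mk3 merge_mk' mk_app er Dc_cop r0)
        then have "\<sigma> (mk [x, y]) = - \<alpha> (mk [ev v, r, y]) / cop_coeff (ev v) r"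
          using cop_nz[of "ev v" r, where 'k='k] by (simp add: field_simps)
        then show ?thesis using True deg x0 y0 by (simp add: sig0_mk Let_def v_def[symmetric] r_def[symmetric])
      next
        case False
        have "sz x \<noteq> 0" using x0 sz0 by auto
        then have sy: "2 \<le> sz y" using False deg n3 by linarith
        define w where "w = (SOME w. 0 < y w)"
        have yw: "y w \<noteq> 0" unfolding w_def by (rule some_nz[OF y0])
        define r where "r = (\<lambda>u. y u - ev w u)"
        have r0: "r \<noteq> (\<lambda>_. 0)" using sz_sub[of y w, OF yw] sy sz0[of r] by (auto simp: r_def)
        have er: "(\<lambda>u. ev w u + r u) = y" unfolding r_def by (rule ev_r[of y w, OF yw])
        have "d_at 1 \<sigma> (mk [x, ev w, r]) = - \<beta> (mk [x, ev w, r])" using d1 by simp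
        then have "cop_coeff (ev w) r * \<sigma> (mk [x, y]) = - \<beta> (mk [x, ev w, r])"
          by (simp add: d_at_Dc merge_mk3 merge_mk' mk_app er Dc_cop r0)
        then have "\<sigma> (mk [x, y]) = - \<beta> (mk [x, ev w, r]) / cop_coeff (ev w) r"
          using cop_nz[of "ev w" r, where 'k='k] by (simp add: field_simps)
        then show ?thesis using False deg x0 y0 by (simp add: sig0_mk Let_def w_def[symmetric] r_def[symmetric])
      qed
    qed
  qed
qed



lemma alg: "(K::'k::field) \<noteq> 0 \<Longrightarrow> P * A = K * X \<Longrightarrow> P * (- A / K) = - X"
proof -
  assume K: "K \<noteq> 0" and e: "P * A = K * X"
  have "P * (- A / K) = - (P * A) / K" by simp
  also have "\<dots> = - (K * X) / K" using e by simp
  also have "\<dots> = - X" using K by simp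
  finally show ?thesis .
qed

lemma exist:
  fixes \<alpha> \<beta> :: "('v::finite, 'k::field_char_0) tens"
  assumes n3: "n \<ge> 3" and hA: "homog 3 n \<alpha>" and hB: "homog 3 n \<beta>"
    and a0: "eps_at 0 \<alpha> = (\<lambda>_. 0)" and a1: "eps_at 1 \<alpha> = (\<lambda>_. 0)" and a2: "eps_at 2 \<alpha> = (\<lambda>_. 0)"
    and b0: "eps_at 0 \<beta> = (\<lambda>_. 0)" and b1: "eps_at 1 \<beta> = (\<lambda>_. 0)" and b2: "eps_at 2 \<beta> = (\<lambda>_. 0)"
    and C1: "d_at 2 \<alpha> = d_at 0 \<beta>"
    and C2: "(\<lambda>m. d_at 0 \<alpha> m - d_at 1 \<alpha> m) = (\<lambda>_. 0)"
    and C3: "(\<lambda>m. d_at 1 \<beta> m - d_at 2 \<beta> m) = (\<lambda>_. 0)"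
    and C4: "\<alpha> = swap_at 0 \<alpha>" and C5: "\<beta> = swap_at 1 \<beta>"
  shows "homog 2 n (sig0 n \<alpha> \<beta>) \<and> eps_at 0 (sig0 n \<alpha> \<beta>) = (\<lambda>_. 0) \<and> eps_at 1 (sig0 n \<alpha> \<beta>) = (\<lambda>_. 0)
         \<and> d_at 0 (sig0 n \<alpha> \<beta>) = (\<lambda>m. - \<alpha> m) \<and> d_at 1 (sig0 n \<alpha> \<beta>) = (\<lambda>m. - \<beta> m)"
proof -
  let ?s = "sig0 n \<alpha> \<beta>"
  have \<alpha>0: "\<alpha> (mk [\<lambda>_. 0, b, c]) = 0" for b c
    using fun_cong[OF a0, of "mk [b, c]"] by (simp add: eps_at_def ins_mk ins_mk')
  have \<alpha>1: "\<alpha> (mk [a, \<lambda>_. 0, c]) = 0" for a c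
    using fun_cong[OF a1, of "mk [a, c]"] by (simp add: eps_at_def ins_mk ins_mk')
  have \<alpha>2: "\<alpha> (mk [a, b, \<lambda>_. 0]) = 0" for a b
    using fun_cong[OF a2, of "mk [a, b]"] by (simp add: eps_at_def ins_mk ins_mk')
  have \<beta>0: "\<beta> (mk [\<lambda>_. 0, b, c]) = 0" for b c
    using fun_cong[OF b0, of "mk [b, c]"] by (simp add: eps_at_def ins_mk ins_mk')
  have \<beta>1: "\<beta> (mk [a, \<lambda>_. 0, c]) = 0" for a c
    using fun_cong[OF b1, of "mk [a, c]"] by (simp add: eps_at_def ins_mk ins_mk')
  have \<beta>2: "\<beta> (mk [a, b, \<lambda>_. 0]) = 0" for a b
    using fun_cong[OF b2, of "mk [a, b]"] by (simp add: eps_at_def ins_mk ins_mk')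
  have \<alpha>deg: "sz a + sz b + sz c \<noteq> n \<Longrightarrow> \<alpha> (mk [a, b, c]) = 0" for a b c
    using homog_deg[OF hA, of "mk [a, b, c]"] by (simp add: mdeg3 mk_app)
  have \<beta>deg: "sz a + sz b + sz c \<noteq> n \<Longrightarrow> \<beta> (mk [a, b, c]) = 0" for a b c
    using homog_deg[OF hB, of "mk [a, b, c]"] by (simp add: mdeg3 mk_app)
  have \<alpha>S: "\<alpha> (mk [a, b, c]) = \<alpha> (mk [b, a, c])" for a b c
    using fun_cong[OF C4, of "mk [a, b, c]"] by (simp add: swap_mk swap_mk')
  have \<beta>S: "\<beta> (mk [a, b, c]) = \<beta> (mk [a, c, b])" for a b c
    using fun_cong[OF C5, of "mk [a, b, c]"] by (simp add: swap_mk swap_mk')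
  have \<alpha>A: "cop_coeff a b * \<alpha> (mk [\<lambda>v. a v + b v, c', c]) = cop_coeff b c' * \<alpha> (mk [a, \<lambda>v. b v + c' v, c])"
    if "a \<noteq> (\<lambda>_. 0)" "b \<noteq> (\<lambda>_. 0)" "c' \<noteq> (\<lambda>_. 0)" for a b c' c
    using fun_cong[OF C2, of "mk [a, b, c', c]"] that
    by (simp add: d_at_Dc merge_mk4 merge_mk' mk_app Dc_cop)
  have \<beta>A: "cop_coeff b1 b2 * \<beta> (mk [a, \<lambda>v. b1 v + b2 v, b3]) = cop_coeff b2 b3 * \<beta> (mk [a, b1, \<lambda>v. b2 v + b3 v])"
    if "b1 \<noteq> (\<lambda>_. 0)" "b2 \<noteq> (\<lambda>_. 0)" "b3 \<noteq> (\<lambda>_. 0)" for a b1 b2 b3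
    using fun_cong[OF C3, of "mk [a, b1, b2, b3]"] that
    by (simp add: d_at_Dc merge_mk4 merge_mk' mk_app Dc_cop)
  have compat: "cop_coeff b c * \<alpha> (mk [e, r, \<lambda>v. b v + c v]) = cop_coeff e r * \<beta> (mk [\<lambda>u. e u + r u, b, c])"
    if "e \<noteq> (\<lambda>_. 0)" "r \<noteq> (\<lambda>_. 0)" "b \<noteq> (\<lambda>_. 0)" "c \<noteq> (\<lambda>_. 0)" for e r b c
    using fun_cong[OF C1, of "mk [e, r, b, c]"] that
    by (simp add: d_at_Dc merge_mk4 merge_mk' mk_app Dc_cop mult.commute)
  have \<alpha>split: "cop_coeff a b * \<alpha> (mk [ev v, \<lambda>u. a u + b u - ev v u, c])
      = cop_coeff (ev v) (\<lambda>u. a u + b u - ev v u) * \<alpha> (mk [a, b, c])"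
    if "a \<noteq> (\<lambda>_. 0)" "b \<noteq> (\<lambda>_. 0)" "0 < a v + b v" for a b c v
    by (rule split_weighted[where f="\<lambda>a b. \<alpha> (mk [a, b, c])"]) (use \<alpha>S \<alpha>A that in auto)
  have \<beta>split: "cop_coeff b c * \<beta> (mk [a, ev v, \<lambda>u. b u + c u - ev v u])
      = cop_coeff (ev v) (\<lambda>u. b u + c u - ev v u) * \<beta> (mk [a, b, c])"
    if "b \<noteq> (\<lambda>_. 0)" "c \<noteq> (\<lambda>_. 0)" "0 < b v + c v" for a b c v
    by (rule split_weighted[where f="\<lambda>b c. \<beta> (mk [a, b, c])"]) (use \<beta>S \<beta>A that in auto)
  have H: "homog 2 n ?s" unfolding homog_def
  proof (intro allI impI)
    fix m :: "'v mono"
    assume "?s m \<noteq> 0"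
    then have "supp_ok 2 m \<and> sz (m 0) + sz (m 1) = n" by (auto simp: sig0_def split: if_splits)
    then show "(\<forall>j\<ge>2. \<forall>v. m j v = 0) \<and> mdeg 2 m = n" by (simp add: supp_ok_def mdeg2)
  qed
  have E0: "eps_at 0 ?s = (\<lambda>_. 0)" by (rule ext) (simp add: eps_at_def sig0_def ins_zero_def)
  have E1: "eps_at 1 ?s = (\<lambda>_. 0)" by (rule ext) (simp add: eps_at_def sig0_def ins_zero_def)
  have notsupp: "?s (merge_at i m) = 0" if "i < 2" "\<not> supp_ok 3 m" for i m
  proof -
    have "\<not> supp_ok 2 (merge_at i m)" using merge_supp[of i 2 m] that by (simp add: numeral_3_eq_3 numeral_2_eq_2)
    then show ?thesis by (simp add: sig0_def)
  qed
  have D0: "d_at 0 ?s = (\<lambda>m. - \<alpha> m)"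
  proof
    fix m :: "'v mono"
    show "d_at 0 ?s m = - \<alpha> m"
    proof (cases "supp_ok 3 m")
      case False
      then show ?thesis using homog_supp[OF hA False] notsupp[of 0 m] by (simp add: d_at_Dc)
    next
      case True
      define a b c where "a = m 0" and "b = m 1" and "c = m 2"
      have m: "m = mk [a, b, c]" using mk3_supp[OF True] a_def b_def c_def by simp
      have goal: "Dc a b * ?s (mk [\<lambda>v. a v + b v, c]) = - \<alpha> (mk [a, b, c])"
      proof (cases "a = (\<lambda>_. 0)")
        case True
        then show ?thesis by (cases "b = (\<lambda>_. 0)") (simp_all add: Dc_def sig0_mk \<alpha>0)
      next
        case a0: False
        show ?thesis
        proof (cases "b = (\<lambda>_. 0)")
          case True
          then show ?thesis using a0 by (simp add: Dc_def \<alpha>1)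
        next
          case b0: False
          show ?thesis
          proof (cases "c = (\<lambda>_. 0)")
            case True
            then show ?thesis by (simp add: sig0_mk \<alpha>2)
          next
            case c0: False
            show ?thesis
            proof (cases "sz a + sz b + sz c = n")
              case False
              then show ?thesis using \<alpha>deg[OF False] by (simp add: sig0_mk sz_add)
            next
              case deg: True
              have sx: "2 \<le> sz a + sz b" using a0 b0 sz0[of a] sz0[of b] by linarith
              define v where "v = (SOME v. 0 < a v + b v)"
              have xv: "0 < a v + b v" using some_nz[of "\<lambda>v. a v + b v"] a0 by (simp add: v_def)
              have "?s (mk [\<lambda>v. a v + b v, c]) = - \<alpha> (mk [ev v, \<lambda>u. a u + b u - ev v u, c]) / cop_coeff (ev v) (\<lambda>u. a u + b u - ev v u)"
                using sx deg a0 b0 c0 unfolding sig0_mk[of n \<alpha> \<beta> "\<lambda>v. a v + b v" c] Let_def v_def[symmetric]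
                by (simp add: sz_add)
              moreover have "cop_coeff a b * (- \<alpha> (mk [ev v, \<lambda>u. a u + b u - ev v u, c]) / cop_coeff (ev v) (\<lambda>u. a u + b u - ev v u)) = - \<alpha> (mk [a, b, c])"
                by (rule alg[OF cop_nz \<alpha>split[OF a0 b0 xv, of c]])
              ultimately show ?thesis using a0 b0 by (simp add: Dc_cop)
            qed
          qed
        qed
      qed
      show ?thesis unfolding m by (simp add: d_at_Dc merge_mk3 mk_app goal)
    qed
  qed
  have D1: "d_at 1 ?s = (\<lambda>m. - \<beta> m)"
  proof
    fix m :: "'v mono"
    show "d_at 1 ?s m = - \<beta> m"
    proof (cases "supp_ok 3 m")
      case False
      then show ?thesis using homog_supp[OF hB False] notsupp[of 1 m] by (simp add: d_at_Dc)
    next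
      case True
      define a b c where "a = m 0" and "b = m 1" and "c = m 2"
      have m: "m = mk [a, b, c]" using mk3_supp[OF True] a_def b_def c_def by simp
      have goal: "Dc b c * ?s (mk [a, \<lambda>v. b v + c v]) = - \<beta> (mk [a, b, c])"
      proof (cases "a = (\<lambda>_. 0)")
        case True
        then show ?thesis by (simp add: sig0_mk \<beta>0)
      next
        case a0: False
        show ?thesis
        proof (cases "b = (\<lambda>_. 0)")
          case True
          then show ?thesis by (cases "c = (\<lambda>_. 0)") (simp_all add: Dc_def sig0_mk \<beta>1)
        next
          case b0: False
          show ?thesis
          proof (cases "c = (\<lambda>_. 0)")
            case True
            then show ?thesis using b0 by (simp add: Dc_def \<beta>2)
          next
            case c0: False
            show ?thesis
            proof (cases "sz a + sz b + sz c = n")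
              case False
              then show ?thesis using \<beta>deg[OF False] by (simp add: sig0_mk sz_add add.assoc)
            next
              case deg: True
              show ?thesis
              proof (cases "2 \<le> sz a")
                case True
                define v where "v = (SOME v. 0 < a v)"
                have av: "a v \<noteq> 0" unfolding v_def by (rule some_nz[OF a0])
                define r where "r = (\<lambda>u. a u - ev v u)"
                have r0: "r \<noteq> (\<lambda>_. 0)" using sz_sub[of a v, OF av] True sz0[of r] by (auto simp: r_def)
                have er: "(\<lambda>u. ev v u + r u) = a" unfolding r_def by (rule ev_r[of a v, OF av])
                have "?s (mk [a, \<lambda>v. b v + c v]) = - \<alpha> (mk [ev v, r, \<lambda>v. b v + c v]) / cop_coeff (ev v) r"
                  using True deg a0 b0 c0 by (simp add: sig0_mk Let_def v_def[symmetric] r_def[symmetric] sz_add add.assoc)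
                moreover have "cop_coeff b c * (- \<alpha> (mk [ev v, r, \<lambda>v. b v + c v]) / cop_coeff (ev v) r) = - \<beta> (mk [a, b, c])"
                  by (rule alg[OF cop_nz]) (use compat[OF ev_nz r0 b0 c0] er in simp)
                ultimately show ?thesis using b0 c0 by (simp add: Dc_cop)
              next
                case False
                have "sz a \<noteq> 0" using a0 sz0 by auto
                then have sy: "2 \<le> sz b + sz c" using False deg n3 by linarith
                define w where "w = (SOME w. 0 < b w + c w)"
                have xw: "0 < b w + c w" using some_nz[of "\<lambda>v. b v + c v"] b0 by (simp add: w_def)
                have "?s (mk [a, \<lambda>v. b v + c v]) = - \<beta> (mk [a, ev w, \<lambda>u. b u + c u - ev w u]) / cop_coeff (ev w) (\<lambda>u. b u + c u - ev w u)"
                  using False sy deg a0 b0 c0 unfolding sig0_mk[of n \<alpha> \<beta> a "\<lambda>v. b v + c v"] Let_def w_def[symmetric]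
                  by (simp add: sz_add add.assoc)
                moreover have "cop_coeff b c * (- \<beta> (mk [a, ev w, \<lambda>u. b u + c u - ev w u]) / cop_coeff (ev w) (\<lambda>u. b u + c u - ev w u)) = - \<beta> (mk [a, b, c])"
                  by (rule alg[OF cop_nz \<beta>split[OF b0 c0 xw, of a]])
                ultimately show ?thesis using b0 c0 by (simp add: Dc_cop)
              qed
            qed
          qed
        qed
      qed
      show ?thesis unfolding m by (simp add: d_at_Dc merge_mk3 merge_mk' mk_app goal)
    qed
  qed
  show ?thesis using H E0 E1 D0 D1 by blast
qed


theorem lemma3p3:
  fixes \<alpha> \<beta> :: "('v::finite, 'k::field_char_0) tens" and n :: nat
  assumes "n \<ge> 3"
    and "homog 3 n \<alpha>" and "homog 3 n \<beta>"
    and "eps_at 0 \<alpha> = (\<lambda>_. 0)" and "eps_at 1 \<alpha> = (\<lambda>_. 0)" and "eps_at 2 \<alpha> = (\<lambda>_. 0)"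
    and "eps_at 0 \<beta> = (\<lambda>_. 0)" and "eps_at 1 \<beta> = (\<lambda>_. 0)" and "eps_at 2 \<beta> = (\<lambda>_. 0)"
  shows
    "((\<exists>\<sigma> :: ('v, 'k) tens. homog 2 n \<sigma> \<and> eps_at 0 \<sigma> = (\<lambda>_. 0) \<and> eps_at 1 \<sigma> = (\<lambda>_. 0)
         \<and> d_at 0 \<sigma> = (\<lambda>m. - \<alpha> m) \<and> d_at 1 \<sigma> = (\<lambda>m. - \<beta> m))
      \<longleftrightarrow>
      (d_at 2 \<alpha> = d_at 0 \<beta>
       \<and> (\<lambda>m. d_at 0 \<alpha> m - d_at 1 \<alpha> m) = (\<lambda>_. 0)
       \<and> (\<lambda>m. d_at 1 \<beta> m - d_at 2 \<beta> m) = (\<lambda>_. 0)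
       \<and> \<alpha> = swap_at 0 \<alpha>
       \<and> \<beta> = swap_at 1 \<beta>))
   \<and>
    ((d_at 2 \<alpha> = d_at 0 \<beta>
       \<and> (\<lambda>m. d_at 0 \<alpha> m - d_at 1 \<alpha> m) = (\<lambda>_. 0)
       \<and> (\<lambda>m. d_at 1 \<beta> m - d_at 2 \<beta> m) = (\<lambda>_. 0)
       \<and> \<alpha> = swap_at 0 \<alpha>
       \<and> \<beta> = swap_at 1 \<beta>)
     \<longrightarrow> (\<exists>!\<sigma> :: ('v, 'k) tens. homog 2 n \<sigma> \<and> eps_at 0 \<sigma> = (\<lambda>_. 0) \<and> eps_at 1 \<sigma> = (\<lambda>_. 0)
         \<and> d_at 0 \<sigma> = (\<lambda>m. - \<alpha> m) \<and> d_at 1 \<sigma> = (\<lambda>m. - \<beta> m)))"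
proof -
  let ?C = "d_at 2 \<alpha> = d_at 0 \<beta>
       \<and> (\<lambda>m. d_at 0 \<alpha> m - d_at 1 \<alpha> m) = (\<lambda>_. 0)
       \<and> (\<lambda>m. d_at 1 \<beta> m - d_at 2 \<beta> m) = (\<lambda>_. 0)
       \<and> \<alpha> = swap_at 0 \<alpha>
       \<and> \<beta> = swap_at 1 \<beta>"
  let ?P = "\<lambda>\<sigma>. homog 2 n \<sigma> \<and> eps_at 0 \<sigma> = (\<lambda>_. 0) \<and> eps_at 1 \<sigma> = (\<lambda>_. 0)
         \<and> d_at 0 \<sigma> = (\<lambda>m. - \<alpha> m) \<and> d_at 1 \<sigma> = (\<lambda>m. - \<beta> m)"
  have ex: "?P (sig0 n \<alpha> \<beta>)" if ?C using exist[OF assms(1-9)] that by blast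
  have ne: ?C if "?P \<sigma>" for \<sigma> using nec[of \<sigma> \<alpha> \<beta>] that by blast
  have un: "\<sigma> = sig0 n \<alpha> \<beta>" if "?P \<sigma>" for \<sigma> using uniq[OF assms(1), of \<sigma> \<alpha> \<beta>] that by blast
  have 1: "(\<exists>\<sigma>. ?P \<sigma>) \<longleftrightarrow> ?C" using ex ne by blast
  have 2: "?C \<longrightarrow> (\<exists>!\<sigma>. ?P \<sigma>)"
  proof
    assume c: ?C
    show "\<exists>!\<sigma>. ?P \<sigma>"
    proof (rule ex1I[of _ "sig0 n \<alpha> \<beta>"])
      show "?P (sig0 n \<alpha> \<beta>)" by (rule ex[OF c])
    next
      fix \<sigma> assume "?P \<sigma>" then show "\<sigma> = sig0 n \<alpha> \<beta>" by (rule un)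
    qed
  qed
  show ?thesis using 1 2 by blast
qed

end
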